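(* Let $K$ and $L$ be sets of positive integers, and suppose $(X,\mathcal{G},\mathcal{A})$ is a $(K,1)$-GDD with group sizes in $L$ such that (1) for every $k\in K$ there is a nested $(4,1)$-GDD of type $3^k$, and (2) for every $\ell\in L$ there is a nested $(3\ell+1,4,1)$-BIBD. Then there is a nested $(3|X|+1,4,1)$-BIBD.
   Context: A $(K,1)$-GDD with group sizes in $L$ is a triple $(X,\mathcal{G},\mathcal{A})$ where $\mathcal{G}$ is a partition of the point set $X$ into groups with $|G|\in L$ for all $G\in\mathcal{G}$, and $\mathcal{A}$ is a set of blocks with $|A|\in K$, each block meeting each group in at most one point, and every pair of points from different groups lying in exactly one block. A $(k,\lambda)$-GDD of type $t^u$ is such a structure with $tu$ points, $u$ groups of size $t$, all blocks of size $k$ (blocks forming a multiset) and every pair from different groups in exactly $\lambda$ blocks; a partial one has "at most $\lambda$". It is nested if there is $\phi:\mathcal{A}\to X$ with $(X,\mathcal{G},\{A\cup\{\phi(A)\}\})$ a partial $(k+1,\lambda+1)$-GDD of type $t^u$. A $(v,k,\lambda)$-BIBD is a set $X$ of $v$ points with a multiset $\mathcal{A}$ of $k$-subsets such that every pair of distinct points lies in exactly $\lambda$ blocks (partial: at most $\lambda$); it is nested if there is $\phi:\mathcal{A}\to X$ such that $\{A\cup\{\phi(A)\}:A\in\mathcal{A}\}$ is the block multiset of a partial $(v,k+1,\lambda+1)$-BIBD (in particular $\phi(A)\notin A$). *)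

theory Defs
  imports Main "HOL-Library.Multiset"
begin

definition is_group_partition :: "'a set \<Rightarrow> 'a set set \<Rightarrow> bool" where
  "is_group_partition X \<G> \<longleftrightarrow>
     (\<forall>G\<in>\<G>. G \<noteq> {}) \<and> \<Union>\<G> = X \<and>
     (\<forall>G1\<in>\<G>. \<forall>G2\<in>\<G>. G1 \<noteq> G2 \<longrightarrow> G1 \<inter> G2 = {})"

(* (K,1)-GDD with group sizes in L (blocks form a set, since lambda = 1) *)
definition K1_GDD :: "nat set \<Rightarrow> nat set \<Rightarrow> 'a set \<Rightarrow> 'a set set \<Rightarrow> 'a set set \<Rightarrow> bool" where
  "K1_GDD K L X \<G> \<A> \<longleftrightarrow>
     finite X \<and> is_group_partition X \<G> \<and>
     (\<forall>G\<in>\<G>. card G \<in> L) \<and>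
     (\<forall>A\<in>\<A>. A \<subseteq> X \<and> card A \<in> K) \<and>
     (\<forall>A\<in>\<A>. \<forall>G\<in>\<G>. card (A \<inter> G) \<le> 1) \<and>
     (\<forall>x\<in>X. \<forall>y\<in>X. x \<noteq> y \<longrightarrow> \<not> (\<exists>G\<in>\<G>. x \<in> G \<and> y \<in> G) \<longrightarrow>
        card {A\<in>\<A>. x \<in> A \<and> y \<in> A} = 1)"

definition pair_count :: "'a set multiset \<Rightarrow> 'a \<Rightarrow> 'a \<Rightarrow> nat" where
  "pair_count \<A> x y = size (filter_mset (\<lambda>B. x \<in> B \<and> y \<in> B) \<A>)"

definition GDD_type :: "bool \<Rightarrow> nat \<Rightarrow> nat \<Rightarrow> nat \<Rightarrow> nat \<Rightarrow> 'a set \<Rightarrow> 'a set set \<Rightarrow> 'a set multiset \<Rightarrow> bool" where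
  "GDD_type partial k lam t u X \<G> \<A> \<longleftrightarrow>
     finite X \<and> card X = t * u \<and> is_group_partition X \<G> \<and>
     card \<G> = u \<and> (\<forall>G\<in>\<G>. card G = t) \<and>
     (\<forall>A\<in>#\<A>. A \<subseteq> X \<and> card A = k) \<and>
     (\<forall>A\<in>#\<A>. \<forall>G\<in>\<G>. card (A \<inter> G) \<le> 1) \<and>
     (\<forall>x\<in>X. \<forall>y\<in>X. x \<noteq> y \<longrightarrow> \<not> (\<exists>G\<in>\<G>. x \<in> G \<and> y \<in> G) \<longrightarrow>
        (if partial then pair_count \<A> x y \<le> lam else pair_count \<A> x y = lam))"

definition nested_GDD :: "nat \<Rightarrow> nat \<Rightarrow> nat \<Rightarrow> nat \<Rightarrow> 'a set \<Rightarrow> 'a set set \<Rightarrow> 'a set multiset \<Rightarrow> bool" where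
  "nested_GDD k lam t u X \<G> \<A> \<longleftrightarrow>
     GDD_type False k lam t u X \<G> \<A> \<and>
     (\<exists>\<phi> :: 'a set \<Rightarrow> 'a.
        GDD_type True (k + 1) (lam + 1) t u X \<G> (image_mset (\<lambda>A. insert (\<phi> A) A) \<A>))"

definition BIBD :: "bool \<Rightarrow> nat \<Rightarrow> nat \<Rightarrow> nat \<Rightarrow> 'a set \<Rightarrow> 'a set multiset \<Rightarrow> bool" where
  "BIBD partial v k lam X \<A> \<longleftrightarrow>
     finite X \<and> card X = v \<and>
     (\<forall>A\<in>#\<A>. A \<subseteq> X \<and> card A = k) \<and>
     (\<forall>x\<in>X. \<forall>y\<in>X. x \<noteq> y \<longrightarrow>
        (if partial then pair_count \<A> x y \<le> lam else pair_count \<A> x y = lam))"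

definition nested_BIBD :: "nat \<Rightarrow> nat \<Rightarrow> nat \<Rightarrow> 'a set \<Rightarrow> 'a set multiset \<Rightarrow> bool" where
  "nested_BIBD v k lam X \<A> \<longleftrightarrow>
     BIBD False v k lam X \<A> \<and>
     (\<exists>\<phi> :: 'a set \<Rightarrow> 'a.
        BIBD True v (k + 1) (lam + 1) X (image_mset (\<lambda>A. insert (\<phi> A) A) \<A>))"

end

theory Submission
  imports Defs
begin

lemma pair_count_plus: "pair_count (M + N) x y = pair_count M x y + pair_count N x y"
  by (simp add: pair_count_def)

lemma pair_count_sum: "pair_count (sum f S) x y = (\<Sum>s\<in>S. pair_count (f s) x y)"
proof (cases "finite S")
  case True
  then show ?thesis by (induction S rule: finite_induct) (auto simp: pair_count_plus, simp add: pair_count_def)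
next
  case False
  then show ?thesis by (simp add: pair_count_def)
qed

lemma image_mset_sum: "image_mset g (sum f S) = (\<Sum>s\<in>S. image_mset g (f s))"
proof (cases "finite S")
  case True
  then show ?thesis by (induction S rule: finite_induct) auto
qed simp

lemma pair_count_zero:
  assumes "\<forall>B\<in>#M. B \<subseteq> P" and "x \<notin> P \<or> y \<notin> P"
  shows "pair_count M x y = 0"
proof -
  have "filter_mset (\<lambda>B. x \<in> B \<and> y \<in> B) M = {#}"
    using assms by (auto simp: filter_mset_eq_conv)
  then show ?thesis by (simp add: pair_count_def)
qed

lemma pair_count_image:
  assumes "inj_on f Y" "\<forall>B\<in>#M. B \<subseteq> Y" "x \<in> Y" "y \<in> Y"
  shows "pair_count (image_mset (image f) M) (f x) (f y) = pair_count M x y"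
proof -
  have "filter_mset (\<lambda>B. f x \<in> B \<and> f y \<in> B) (image_mset (image f) M)
      = image_mset (image f) (filter_mset (\<lambda>B. f x \<in> f ` B \<and> f y \<in> f ` B) M)"
    by (simp add: filter_mset_image_mset)
  also have "filter_mset (\<lambda>B. f x \<in> f ` B \<and> f y \<in> f ` B) M = filter_mset (\<lambda>B. x \<in> B \<and> y \<in> B) M"
  proof (rule filter_mset_cong[OF refl])
    fix B assume "B \<in># M"
    then have "B \<subseteq> Y" using assms by auto
    then show "(f x \<in> f ` B \<and> f y \<in> f ` B) = (x \<in> B \<and> y \<in> B)"
      using assms(1,3,4) by (meson inj_on_image_mem_iff)
  qed
  finally show ?thesis by (simp add: pair_count_def)
qed

lemma pair_count_sym: "pair_count M x y = pair_count M y x"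
  unfolding pair_count_def by (metis (no_types, lifting) filter_mset_cong)

lemma sum_single:
  assumes "finite S" "s0 \<in> S" "\<forall>s\<in>S. s \<noteq> s0 \<longrightarrow> f s = (0::nat)"
  shows "sum f S = f s0"
  using assms by (metis sum.remove sum.neutral add.right_neutral DiffE insertCI)

lemma BIBD_bij:
  assumes "BIBD p v k lam Y M" "bij_betw f Y Z"
  shows "BIBD p v k lam Z (image_mset (image f) M)"
proof -
  have inj: "inj_on f Y" and im: "f ` Y = Z" using assms(2) by (auto simp: bij_betw_def)
  have sub: "\<forall>B\<in>#M. B \<subseteq> Y" using assms(1) by (simp add: BIBD_def)
  show ?thesis
    unfolding BIBD_def
  proof (intro conjI ballI impI)
    show "finite Z" using assms by (metis BIBD_def bij_betw_finite)
    show "card Z = v" using assms by (metis BIBD_def bij_betw_same_card)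
  next
    fix A assume "A \<in># image_mset ((`) f) M"
    then obtain B where B: "B \<in># M" "A = f ` B" by auto
    then show "A \<subseteq> Z" using assms(1) inj im
      by (auto simp: BIBD_def)
    show "card A = k" using B assms(1) inj
      by (metis BIBD_def card_image inj_on_subset)
  next
    fix x' y' assume "x' \<in> Z" "y' \<in> Z" "x' \<noteq> y'"
    then obtain x y where xy: "x \<in> Y" "y \<in> Y" "x' = f x" "y' = f y" "x \<noteq> y" using im by auto
    have "pair_count (image_mset ((`) f) M) x' y' = pair_count M x y"
      using pair_count_image[OF inj sub xy(1,2)] xy by simp
    then show "if p then pair_count (image_mset ((`) f) M) x' y' \<le> lam
              else pair_count (image_mset ((`) f) M) x' y' = lam"
      using assms(1) xy by (simp add: BIBD_def)
  qed
qed

lemma nested_BIBD_bij: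
  assumes "nested_BIBD v k lam Y M" "bij_betw f Y Z"
  shows "nested_BIBD v k lam Z (image_mset (image f) M)"
proof -
  have inj: "inj_on f Y" using assms(2) by (auto simp: bij_betw_def)
  obtain \<phi> where phi: "BIBD True v (k + 1) (lam + 1) Y (image_mset (\<lambda>A. insert (\<phi> A) A) M)"
    using assms(1) by (auto simp: nested_BIBD_def)
  have sub: "\<forall>B\<in>#M. insert (\<phi> B) B \<subseteq> Y" using phi by (simp add: BIBD_def)
  define \<psi> where "\<psi> S = f (\<phi> (inv_into Y f ` S))" for S
  have eq: "image_mset (\<lambda>A. insert (\<psi> A) A) (image_mset (image f) M)
      = image_mset (image f) (image_mset (\<lambda>A. insert (\<phi> A) A) M)"
    unfolding multiset.map_comp
  proof (rule image_mset_cong)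
    fix B assume "B \<in># M"
    then have "B \<subseteq> Y" using sub by auto
    then have "inv_into Y f ` f ` B = B" using inj by simp
    then show "((\<lambda>A. insert (\<psi> A) A) \<circ> (`) f) B = ((`) f \<circ> (\<lambda>A. insert (\<phi> A) A)) B"
      by (simp add: \<psi>_def)
  qed
  show ?thesis
    using assms BIBD_bij[OF phi assms(2)] unfolding nested_BIBD_def eq[symmetric]
    by (auto intro: BIBD_bij)
qed

lemma nested_BIBD_transport:
  assumes "nested_BIBD v k lam (Y::'b set) M" "finite (Z::'c set)" "card Z = v"
  shows "\<exists>M'. nested_BIBD v k lam Z M'"
proof -
  have "finite Y" "card Y = v" using assms(1) by (auto simp: nested_BIBD_def BIBD_def)
  then obtain f where "bij_betw f Y Z" using assms(2,3) by (metis finite_same_card_bij)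
  then show ?thesis using nested_BIBD_bij[OF assms(1)] by blast
qed

lemma partition_unique:
  assumes "is_group_partition Y H" "G1 \<in> H" "G2 \<in> H" "x \<in> G1" "x \<in> G2"
  shows "G1 = G2"
  using assms unfolding is_group_partition_def by blast

lemma partition_bij:
  assumes PY: "is_group_partition Y \<H>" and PZ: "is_group_partition Z \<Gamma>"
    and fY: "finite Y" and fZ: "finite Z" and cc: "card \<H> = card \<Gamma>"
    and cH: "\<forall>H\<in>\<H>. card H = t" and cG: "\<forall>C\<in>\<Gamma>. card C = t"
  shows "\<exists>f. bij_betw f Y Z \<and> (`) f ` \<H> = \<Gamma>"
proof -
  have UY: "\<Union>\<H> = Y" and UZ: "\<Union>\<Gamma> = Z" using PY PZ by (auto simp: is_group_partition_def)
  have fH: "finite \<H>" using fY UY by (metis Sup_upper finite_UnionD)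
  have fG: "finite \<Gamma>" using fZ UZ by (metis finite_UnionD)
  obtain \<alpha> where \<alpha>: "bij_betw \<alpha> \<H> \<Gamma>" using fH fG cc by (metis finite_same_card_bij)
  have "\<forall>H\<in>\<H>. \<exists>\<beta>. bij_betw \<beta> H (\<alpha> H)"
  proof
    fix H assume H: "H \<in> \<H>"
    then have "\<alpha> H \<in> \<Gamma>" using \<alpha> by (auto simp: bij_betw_def)
    moreover have "finite H" using H fY UY by (metis Sup_upper finite_subset)
    moreover have "finite (\<alpha> H)" using calculation fZ UZ by (metis Sup_upper finite_subset)
    ultimately show "\<exists>\<beta>. bij_betw \<beta> H (\<alpha> H)" using H cH cG by (metis finite_same_card_bij)
  qed
  from bchoice[OF this] obtain \<beta> where \<beta>: "\<forall>H\<in>\<H>. bij_betw (\<beta> H) H (\<alpha> H)" by blast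
  define f where "f y = \<beta> (THE H. H \<in> \<H> \<and> y \<in> H) y" for y
  have fe: "f y = \<beta> H y" if "H \<in> \<H>" "y \<in> H" for H y
  proof -
    have "(THE H. H \<in> \<H> \<and> y \<in> H) = H"
      by (rule the_equality) (use that partition_unique[OF PY] in blast)+
    then show ?thesis by (simp add: f_def)
  qed
  have fH': "f ` H = \<alpha> H" if "H \<in> \<H>" for H
  proof -
    have "f ` H = \<beta> H ` H" using fe that by auto
    then show ?thesis using \<beta> that by (auto simp: bij_betw_def)
  qed
  have img: "(`) f ` \<H> = \<Gamma>" using fH' \<alpha> by (auto simp: bij_betw_def)
  have "inj_on f Y"
  proof (rule inj_onI)
    fix x y assume "x \<in> Y" "y \<in> Y" "f x = f y"
    then obtain H1 H2 where H: "H1 \<in> \<H>" "x \<in> H1" "H2 \<in> \<H>" "y \<in> H2" using UY by blast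
    have "f x \<in> \<alpha> H1" "f y \<in> \<alpha> H2" using fH' H by blast+
    moreover have "\<alpha> H1 \<in> \<Gamma>" "\<alpha> H2 \<in> \<Gamma>" using H \<alpha> by (auto simp: bij_betw_def)
    ultimately have "\<alpha> H1 = \<alpha> H2" using partition_unique[OF PZ] \<open>f x = f y\<close> by metis
    then have "H1 = H2" using \<alpha> H by (auto simp: bij_betw_def inj_on_def)
    then show "x = y" using \<beta> H fe \<open>f x = f y\<close> by (metis bij_betw_def inj_onD)
  qed
  moreover have "f ` Y = Z" using img UY UZ by auto
  ultimately show ?thesis using img by (auto simp: bij_betw_def)
qed

lemma GDD_bij:
  assumes G: "GDD_type p k lam t u Y \<H> M" and b: "bij_betw f Y Z"
  shows "GDD_type p k lam t u Z ((`) f ` \<H>) (image_mset (image f) M)"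
proof -
  have inj: "inj_on f Y" and im: "f ` Y = Z" using b by (auto simp: bij_betw_def)
  have sub: "\<forall>B\<in>#M. B \<subseteq> Y" using G by (simp add: GDD_type_def)
  have PY: "is_group_partition Y \<H>" using G by (simp add: GDD_type_def)
  have HY: "\<forall>H\<in>\<H>. H \<subseteq> Y" using PY by (auto simp: is_group_partition_def)
  have injH: "inj_on ((`) f) \<H>"
    using inj_on_image_Pow[OF inj] HY by (meson PowI inj_on_subset subsetI)
  show ?thesis
    unfolding GDD_type_def
  proof (intro conjI ballI impI)
    have "finite Y" "card Y = t * u" using G by (auto simp: GDD_type_def)
    then show "finite Z" "card Z = t * u" using b by (auto simp: bij_betw_finite dest: bij_betw_same_card)
    have P1: "\<forall>G\<in>\<H>. G \<noteq> {}" and P2: "\<Union>\<H> = Y"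
      and P3: "\<forall>G1\<in>\<H>. \<forall>G2\<in>\<H>. G1 \<noteq> G2 \<longrightarrow> G1 \<inter> G2 = {}"
      using PY unfolding is_group_partition_def by blast+
    show "is_group_partition Z ((`) f ` \<H>)"
      unfolding is_group_partition_def
    proof (intro conjI ballI impI)
      fix G1 G2 assume "G1 \<in> (`) f ` \<H>" "G2 \<in> (`) f ` \<H>" "G1 \<noteq> G2"
      then obtain H1 H2 where H: "H1 \<in> \<H>" "H2 \<in> \<H>" "G1 = f ` H1" "G2 = f ` H2" "H1 \<noteq> H2" by auto
      then have "H1 \<inter> H2 = {}" using P3 by blast
      moreover have "f ` (H1 \<inter> H2) = f ` H1 \<inter> f ` H2"
        using inj HY H by (meson inj_on_image_Int)
      ultimately show "G1 \<inter> G2 = {}" using H by simp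
    next
      fix G assume "G \<in> (`) f ` \<H>" then show "G \<noteq> {}" using P1 by auto
    next
      show "\<Union> ((`) f ` \<H>) = Z" using P2 im by auto
    qed
    show "card ((`) f ` \<H>) = u" using G injH by (simp add: GDD_type_def card_image)
  next
    fix G' assume "G' \<in> (`) f ` \<H>"
    then obtain H where "H \<in> \<H>" "G' = f ` H" by auto
    moreover have "card H = t" using G \<open>H \<in> \<H>\<close> by (simp add: GDD_type_def)
    ultimately show "card G' = t" using inj HY by (metis card_image inj_on_subset)
  next
    fix A assume "A \<in># image_mset ((`) f) M"
    then obtain B where B: "B \<in># M" "A = f ` B" by auto
    then show "A \<subseteq> Z" using sub im by auto
    have "card B = k" using B G by (simp add: GDD_type_def)
    then show "card A = k" using B inj sub by (metis card_image inj_on_subset)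
  next
    fix A G' assume "A \<in># image_mset ((`) f) M" "G' \<in> (`) f ` \<H>"
    then obtain B H where B: "B \<in># M" "A = f ` B" "H \<in> \<H>" "G' = f ` H" by auto
    have "A \<inter> G' = f ` (B \<inter> H)" using B inj sub HY by (simp add: inj_on_image_Int)
    moreover have "card (f ` (B \<inter> H)) = card (B \<inter> H)"
      using inj sub B by (meson card_image inj_on_subset le_infI1)
    ultimately show "card (A \<inter> G') \<le> 1" using G B by (simp add: GDD_type_def)
  next
    fix x' y' assume "x' \<in> Z" "y' \<in> Z" "x' \<noteq> y'" and ng: "\<not> (\<exists>G\<in>(`) f ` \<H>. x' \<in> G \<and> y' \<in> G)"
    then obtain x y where xy: "x \<in> Y" "y \<in> Y" "x' = f x" "y' = f y" "x \<noteq> y" using im by auto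
    have "\<not> (\<exists>G\<in>\<H>. x \<in> G \<and> y \<in> G)" using ng xy by blast
    moreover have "pair_count (image_mset ((`) f) M) x' y' = pair_count M x y"
      using pair_count_image[OF inj sub xy(1,2)] xy by simp
    ultimately show "if p then pair_count (image_mset ((`) f) M) x' y' \<le> lam
              else pair_count (image_mset ((`) f) M) x' y' = lam"
      using G xy by (simp add: GDD_type_def)
  qed
qed

lemma nested_GDD_transport:
  assumes N: "nested_GDD k lam t u (Y::'b set) \<H> M"
    and PZ: "is_group_partition (Z::'c set) \<Gamma>" and fZ: "finite Z" and cG: "card \<Gamma> = u"
    and cC: "\<forall>C\<in>\<Gamma>. card C = t"
  shows "\<exists>M'. nested_GDD k lam t u Z \<Gamma> M'"
proof -
  have G: "GDD_type False k lam t u Y \<H> M" using N by (simp add: nested_GDD_def)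
  obtain \<phi> where phi: "GDD_type True (k + 1) (lam + 1) t u Y \<H> (image_mset (\<lambda>A. insert (\<phi> A) A) M)"
    using N by (auto simp: nested_GDD_def)
  have PY: "is_group_partition Y \<H>" and fY: "finite Y" and cH: "card \<H> = u"
    and cHt: "\<forall>H\<in>\<H>. card H = t"
    using G by (auto simp: GDD_type_def)
  obtain f where b: "bij_betw f Y Z" and img: "(`) f ` \<H> = \<Gamma>"
    using partition_bij[OF PY PZ fY fZ _ cHt cC] cH cG by metis
  have inj: "inj_on f Y" using b by (auto simp: bij_betw_def)
  have sub: "\<forall>B\<in>#M. insert (\<phi> B) B \<subseteq> Y" using phi by (simp add: GDD_type_def)
  define \<psi> where "\<psi> S = f (\<phi> (inv_into Y f ` S))" for S
  have eq: "image_mset (\<lambda>A. insert (\<psi> A) A) (image_mset (image f) M)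
      = image_mset (image f) (image_mset (\<lambda>A. insert (\<phi> A) A) M)"
    unfolding multiset.map_comp
  proof (rule image_mset_cong)
    fix B assume "B \<in># M"
    then have "B \<subseteq> Y" using sub by auto
    then have "inv_into Y f ` f ` B = B" using inj by simp
    then show "((\<lambda>A. insert (\<psi> A) A) \<circ> (`) f) B = ((`) f \<circ> (\<lambda>A. insert (\<phi> A) A)) B"
      by (simp add: \<psi>_def)
  qed
  have "nested_GDD k lam t u Z \<Gamma> (image_mset (image f) M)"
    unfolding nested_GDD_def
    using GDD_bij[OF G b] GDD_bij[OF phi b] img eq by metis
  then show ?thesis by blast
qed

lemma pair_count_zero':
  assumes "\<forall>B\<in>#M. \<not> (x \<in> B \<and> y \<in> B)"
  shows "pair_count M x y = 0"
proof -
  have "filter_mset (\<lambda>B. x \<in> B \<and> y \<in> B) M = {#}"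
    using assms by (auto simp: filter_mset_eq_conv)
  then show ?thesis by (simp add: pair_count_def)
qed

lemma pc_total:
  fixes X :: "'a set" and \<G> \<A> :: "'a set set" and C C' :: "'a set \<Rightarrow> ('a \<times> nat) option set multiset"
  assumes gdd: "K1_GDD K L X \<G> \<A>"
  and QD: "\<forall>A\<in>\<A>. \<forall>B\<in>#C A. B \<subseteq> Some`(A\<times>{0..<3}) \<and> (\<forall>a\<in>A. card (B \<inter> Some`({a}\<times>{0..<3})) \<le> 1)"
  and QE: "\<forall>G\<in>\<G>. \<forall>B\<in>#C' G. B \<subseteq> insert None (Some`(G\<times>{0..<3}))"
  and x: "x \<in> insert None (Some`(X\<times>{0..<3}))" and y: "y \<in> insert None (Some`(X\<times>{0..<3}))"
  and xy: "x \<noteq> y"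
  shows "(\<exists>A\<in>\<A>. x \<in> Some`(A\<times>{0..<3}) \<and> y \<in> Some`(A\<times>{0..<3}) \<and>
            \<not>(\<exists>g\<in>(\<lambda>a. Some`({a}\<times>{0..<3}))`A. x\<in>g \<and> y\<in>g) \<and>
            pair_count (sum C \<A> + sum C' \<G>) x y = pair_count (C A) x y)
       \<or> (\<exists>G\<in>\<G>. x \<in> insert None (Some`(G\<times>{0..<3})) \<and> y \<in> insert None (Some`(G\<times>{0..<3})) \<and>
            pair_count (sum C \<A> + sum C' \<G>) x y = pair_count (C' G) x y)"
proof -
  have fX: "finite X" and PX: "is_group_partition X \<G>" and AX: "\<forall>A\<in>\<A>. A \<subseteq> X"
    and AG: "\<forall>A\<in>\<A>. \<forall>G\<in>\<G>. card (A \<inter> G) \<le> 1"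
    and pr: "\<forall>x\<in>X. \<forall>y\<in>X. x \<noteq> y \<longrightarrow> \<not> (\<exists>G\<in>\<G>. x \<in> G \<and> y \<in> G) \<longrightarrow>
        card {A\<in>\<A>. x \<in> A \<and> y \<in> A} = 1"
    using gdd unfolding K1_GDD_def by blast+
  have UG: "\<Union>\<G> = X" and DG: "\<forall>G1\<in>\<G>. \<forall>G2\<in>\<G>. G1 \<noteq> G2 \<longrightarrow> G1 \<inter> G2 = {}"
    using PX unfolding is_group_partition_def by blast+
  have fA: "finite \<A>" using AX fX by (meson Pow_iff finite_Pow_iff finite_subset subsetI)
  have fG: "finite \<G>" using UG fX by (metis finite_UnionD)
  have GX: "\<forall>G\<in>\<G>. G \<subseteq> X" using UG by blast
  have pcs: "pair_count (sum C \<A> + sum C' \<G>) x y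
      = (\<Sum>A\<in>\<A>. pair_count (C A) x y) + (\<Sum>G\<in>\<G>. pair_count (C' G) x y)"
    by (simp add: pair_count_plus pair_count_sum)
  have zA: "pair_count (C A) x y = 0" if "A \<in> \<A>" "x \<notin> Some`(A\<times>{0..<3}) \<or> y \<notin> Some`(A\<times>{0..<3})" for A
    using pair_count_zero[of "C A" "Some`(A\<times>{0..<3})" x y] QD that by blast
  have zG: "pair_count (C' G) x y = 0" if "G \<in> \<G>" "x \<notin> insert None (Some`(G\<times>{0..<3})) \<or> y \<notin> insert None (Some`(G\<times>{0..<3}))" for G
    using pair_count_zero[of "C' G" "insert None (Some`(G\<times>{0..<3}))" x y] QE that by blast
  have gA: "pair_count (C A) x y = 0" if "A \<in> \<A>" "x \<in> Some`({a}\<times>{0..<3})" "y \<in> Some`({a}\<times>{0..<3})" for A a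
  proof (rule pair_count_zero', intro ballI notI)
    fix B assume B: "B \<in># C A" "x \<in> B \<and> y \<in> B"
    then have "x \<in> Some`(A\<times>{0..<3})" using QD that by blast
    then have "a \<in> A" using that by auto
    then have c: "card (B \<inter> Some`({a}\<times>{0..<3})) \<le> 1" using QD that B by blast
    have "{x, y} \<subseteq> B \<inter> Some`({a}\<times>{0..<3})" using B that by auto
    then have "card {x,y} \<le> card (B \<inter> Some`({a}\<times>{0..<3}))" by (intro card_mono) auto
    then show False using c xy by simp
  qed
  have uniqG: "G1 = G2" if "G1 \<in> \<G>" "G2 \<in> \<G>" "c \<in> G1" "c \<in> G2" for G1 G2 c
    using DG that by blast
  show ?thesis
  proof (cases "x = None \<or> y = None")
    case True
    then obtain b j where Nb: "(x = None \<and> y = Some (b,j)) \<or> (y = None \<and> x = Some (b,j))" and b: "b \<in> X" "j < 3"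
      using x y xy by auto
    obtain G0 where G0: "G0 \<in> \<G>" "b \<in> G0" using UG b by blast
    have "(\<Sum>A\<in>\<A>. pair_count (C A) x y) = 0"
      by (rule sum.neutral) (use zA Nb in auto)
    moreover have "(\<Sum>G\<in>\<G>. pair_count (C' G) x y) = pair_count (C' G0) x y"
    proof (rule sum_single[OF fG G0(1)], intro ballI impI)
      fix G assume "G \<in> \<G>" "G \<noteq> G0"
      then have "b \<notin> G" using uniqG G0 by blast
      then have "x \<notin> insert None (Some`(G\<times>{0..<3})) \<or> y \<notin> insert None (Some`(G\<times>{0..<3}))"
        using Nb by auto
      then show "pair_count (C' G) x y = 0" using zG \<open>G \<in> \<G>\<close> by blast
    qed
    ultimately have "pair_count (sum C \<A> + sum C' \<G>) x y = pair_count (C' G0) x y" using pcs by simp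
    moreover have "x \<in> insert None (Some`(G0\<times>{0..<3}))" "y \<in> insert None (Some`(G0\<times>{0..<3}))"
      using Nb b G0 by auto
    ultimately show ?thesis using G0(1) by blast
  next
    case False
    then obtain a i b j where ab: "x = Some (a,i)" "y = Some (b,j)" "a \<in> X" "b \<in> X" "i < 3" "j < 3"
      using x y by auto
    obtain Ga where Ga: "Ga \<in> \<G>" "a \<in> Ga" using UG ab by blast
    show ?thesis
    proof (cases "b \<in> Ga")
      case True
      have "(\<Sum>A\<in>\<A>. pair_count (C A) x y) = 0"
      proof (rule sum.neutral, intro ballI)
        fix A assume A: "A \<in> \<A>"
        show "pair_count (C A) x y = 0"
        proof (cases "a = b")
          case True
          then show ?thesis using gA[OF A, of a] ab by auto
        next
          case False
          have "\<not> (a \<in> A \<and> b \<in> A)"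
          proof
            assume "a \<in> A \<and> b \<in> A"
            then have "{a,b} \<subseteq> A \<inter> Ga" using Ga True by auto
            moreover have "finite (A \<inter> Ga)" using fX AX A by (meson finite_Int finite_subset)
            ultimately have "card {a,b} \<le> card (A \<inter> Ga)" by (intro card_mono)
            then show False using AG A Ga False by fastforce
          qed
          then have "x \<notin> Some`(A\<times>{0..<3}) \<or> y \<notin> Some`(A\<times>{0..<3})"
            using ab by auto
          then show ?thesis using zA[OF A] by blast
        qed
      qed
      moreover have "(\<Sum>G\<in>\<G>. pair_count (C' G) x y) = pair_count (C' Ga) x y"
      proof (rule sum_single[OF fG Ga(1)], intro ballI impI)
        fix G assume "G \<in> \<G>" "G \<noteq> Ga"
        then have "a \<notin> G" using uniqG Ga by blast
        then have "x \<notin> insert None (Some`(G\<times>{0..<3})) \<or> y \<notin> insert None (Some`(G\<times>{0..<3}))"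
          using ab by auto
        then show "pair_count (C' G) x y = 0" using zG \<open>G \<in> \<G>\<close> by blast
      qed
      ultimately have "pair_count (sum C \<A> + sum C' \<G>) x y = pair_count (C' Ga) x y" using pcs by simp
      moreover have "x \<in> insert None (Some`(Ga\<times>{0..<3}))" "y \<in> insert None (Some`(Ga\<times>{0..<3}))"
        using ab Ga True by auto
      ultimately show ?thesis using Ga(1) by blast
    next
      case False
      then have "a \<noteq> b" using Ga by auto
      have ng: "\<not> (\<exists>G\<in>\<G>. a \<in> G \<and> b \<in> G)" using False uniqG Ga by blast
      then have "card {A\<in>\<A>. a \<in> A \<and> b \<in> A} = 1" using pr ab \<open>a \<noteq> b\<close> by blast
      then obtain A0 where A0s: "{A\<in>\<A>. a \<in> A \<and> b \<in> A} = {A0}" by (meson card_1_singletonE)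
      then have A0: "A0 \<in> \<A>" "a \<in> A0" "b \<in> A0" by auto
      have "(\<Sum>G\<in>\<G>. pair_count (C' G) x y) = 0"
        by (rule sum.neutral) (use zG ng ab in auto)
      moreover have "(\<Sum>A\<in>\<A>. pair_count (C A) x y) = pair_count (C A0) x y"
      proof (rule sum_single[OF fA A0(1)], intro ballI impI)
        fix A assume "A \<in> \<A>" "A \<noteq> A0"
        then have "\<not> (a \<in> A \<and> b \<in> A)" using A0s by blast
        then have "x \<notin> Some`(A\<times>{0..<3}) \<or> y \<notin> Some`(A\<times>{0..<3})"
          using ab by auto
        then show "pair_count (C A) x y = 0" using zA \<open>A \<in> \<A>\<close> by blast
      qed
      moreover have "\<not>(\<exists>g\<in>(\<lambda>c. Some`({c}\<times>{0..<3}))`A0. x\<in>g \<and> y\<in>g)"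
        using ab \<open>a \<noteq> b\<close> by auto
      moreover have "x \<in> Some`(A0\<times>{0..<3})" "y \<in> Some`(A0\<times>{0..<3})"
        using ab A0 by auto
      ultimately show ?thesis using pcs A0(1) by auto
    qed
  qed
qed

lemma phi_exists:
  assumes "\<forall>B. count (image_mset fst M) B \<le> 1"
  shows "\<exists>\<phi>. image_mset (\<lambda>B. insert (\<phi> B) B) (image_mset fst M) = image_mset (\<lambda>z. insert (snd z) (fst z)) M"
proof -
  define \<phi> where "\<phi> B = (SOME p. (B,p) \<in># M)" for B
  have key: "\<phi> (fst z) = snd z" if "z \<in># M" for z
  proof -
    obtain B p where z: "z = (B,p)" by force
    have in1: "(B, \<phi> B) \<in># M" unfolding \<phi>_def by (rule someI[of _ p]) (use that z in simp)
    show ?thesis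
    proof (rule ccontr)
      assume "\<phi> (fst z) \<noteq> snd z"
      then have ne: "\<phi> B \<noteq> p" using z by simp
      from multi_member_split[of z M] that z obtain M' where M': "M = add_mset (B,p) M'" by blast
      then have "(B, \<phi> B) \<in># M'" using in1 ne by auto
      then have "B \<in># image_mset fst M'" by force
      then have "count (image_mset fst M) B \<ge> 2" using M' by (simp add: Suc_le_eq)
      then show False using assms[rule_format, of B] by linarith
    qed
  qed
  have "image_mset (\<lambda>B. insert (\<phi> B) B) (image_mset fst M) = image_mset (\<lambda>z. insert (\<phi> (fst z)) (fst z)) M"
    by (simp add: multiset.map_comp comp_def)
  also have "\<dots> = image_mset (\<lambda>z. insert (snd z) (fst z)) M"
    by (rule image_mset_cong) (simp add: key)
  finally show ?thesis by blast
qed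

lemma BIBD_count_le1:
  assumes "BIBD False v k 1 Y M" "k \<ge> 2"
  shows "count M B \<le> 1"
proof (rule ccontr)
  assume "\<not> count M B \<le> 1"
  then have c: "count M B \<ge> 2" by simp
  then have "B \<in># M" by (metis count_eq_zero_iff not_numeral_le_zero)
  then have BY: "B \<subseteq> Y" and cB: "card B = k" using assms by (auto simp: BIBD_def)
  then have "card B \<ge> 2" using assms by simp
  then have fB: "finite B" by (metis card_ge_0_finite not_numeral_le_zero not_gr0)
  have "B \<noteq> {}" using \<open>card B \<ge> 2\<close> by auto
  then obtain x where x: "x \<in> B" by blast
  have "card (B - {x}) \<ge> 1" using \<open>card B \<ge> 2\<close> x fB by simp
  then have "B - {x} \<noteq> {}" by (metis card.empty not_one_le_zero)
  then obtain y where "y \<in> B - {x}" by blast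
  then have xy: "x \<in> B" "y \<in> B" "x \<noteq> y" using x by auto
  have "count M B = count (filter_mset (\<lambda>B. x \<in> B \<and> y \<in> B) M) B" using xy by simp
  also have "\<dots> \<le> pair_count M x y" unfolding pair_count_def by (rule count_le_size)
  also have "\<dots> = 1" using assms(1) xy BY unfolding BIBD_def by (metis subsetD)
  finally show False using c by simp
qed

lemma GDD_blocks: "GDD_type p k lam t u X G M \<Longrightarrow> B \<in># M \<Longrightarrow> B \<subseteq> X \<and> card B = k"
  by (simp add: GDD_type_def)
lemma GDD_meet: "GDD_type p k lam t u X G M \<Longrightarrow> B \<in># M \<Longrightarrow> g \<in> G \<Longrightarrow> card (B \<inter> g) \<le> 1"
  by (simp add: GDD_type_def)
lemma GDD_pair: "GDD_type p k lam t u X G M \<Longrightarrow> x \<in> X \<Longrightarrow> y \<in> X \<Longrightarrow> x \<noteq> y \<Longrightarrow>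
   \<not> (\<exists>g\<in>G. x \<in> g \<and> y \<in> g) \<Longrightarrow> (if p then pair_count M x y \<le> lam else pair_count M x y = lam)"
  unfolding GDD_type_def by blast
lemma BIBD_blocks: "BIBD p v k lam X M \<Longrightarrow> B \<in># M \<Longrightarrow> B \<subseteq> X \<and> card B = k"
  by (simp add: BIBD_def)
lemma BIBD_pair: "BIBD p v k lam X M \<Longrightarrow> x \<in> X \<Longrightarrow> y \<in> X \<Longrightarrow> x \<noteq> y \<Longrightarrow>
   (if p then pair_count M x y \<le> lam else pair_count M x y = lam)"
  unfolding BIBD_def by blast

lemma card_Gr: "card (Some ` ({a} \<times> {0..<(3::nat)})) = 3"
  by (simp add: card_image card_cartesian_product)

lemma card_Q:
  assumes "finite G"
  shows "card (insert None (Some ` (G \<times> {0..<(3::nat)}))) = 3 * card G + 1"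
proof -
  have "card (Some ` (G \<times> {0..<(3::nat)})) = card G * 3"
    by (simp add: card_image card_cartesian_product)
  moreover have "finite (Some ` (G \<times> {0..<(3::nat)}))" using assms by simp
  ultimately show ?thesis by simp
qed

theorem mainTheorem8:
  fixes K L :: "nat set" and X :: "'a set" and \<G> \<A> :: "'a set set"
  assumes "\<forall>k\<in>K. k > 0" and "\<forall>l\<in>L. l > 0"
    and "K1_GDD K L X \<G> \<A>"
    and "\<forall>k\<in>K. \<exists>(Y :: nat set) \<H> \<B>. nested_GDD 4 1 3 k Y \<H> \<B>"
    and "\<forall>l\<in>L. \<exists>(Y :: nat set) \<B>. nested_BIBD (3 * l + 1) 4 1 Y \<B>"
  shows "\<exists>(Y :: nat set) \<B>. nested_BIBD (3 * card X + 1) 4 1 Y \<B>"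
proof -
  note gdd = assms(3)
  have fX: "finite X" and PX: "is_group_partition X \<G>" and AX: "\<forall>A\<in>\<A>. A \<subseteq> X"
    and AK: "\<forall>A\<in>\<A>. card A \<in> K" and GL: "\<forall>G\<in>\<G>. card G \<in> L"
    using gdd unfolding K1_GDD_def by blast+
  have UG: "\<Union>\<G> = X" using PX unfolding is_group_partition_def by blast
  have fA: "finite \<A>" using AX fX by (meson Pow_iff finite_Pow_iff finite_subset subsetI)
  have fG: "finite \<G>" using UG fX by (metis finite_UnionD)
  define P where "P A = Some ` (A \<times> {0..<(3::nat)})" for A :: "'a set"
  define Gr where "Gr a = Some ` ({a} \<times> {0..<(3::nat)})" for a :: 'a
  define Q where "Q G = insert None (Some ` (G \<times> {0..<(3::nat)}))" for G :: "'a set"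
  have exD: "\<forall>A\<in>\<A>. \<exists>M. nested_GDD 4 1 3 (card A) (P A) (Gr ` A) M"
  proof
    fix A assume A: "A \<in> \<A>"
    then obtain Y :: "nat set" and H B where N: "nested_GDD 4 1 3 (card A) Y H B"
      using AK assms(4) by blast
    have fAA: "finite A" using A AX fX by (meson finite_subset)
    have part: "is_group_partition (P A) (Gr ` A)"
      unfolding is_group_partition_def
    proof (intro conjI ballI impI)
      fix g assume "g \<in> Gr ` A" then show "g \<noteq> {}" by (auto simp: Gr_def)
    next
      show "\<Union> (Gr ` A) = P A" by (auto simp: Gr_def P_def)
    next
      fix g1 g2 assume "g1 \<in> Gr ` A" "g2 \<in> Gr ` A" "g1 \<noteq> g2"
      then show "g1 \<inter> g2 = {}" by (auto simp: Gr_def)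
    qed
    have injG: "inj_on Gr A"
    proof (rule inj_onI)
      fix a b assume "Gr a = Gr b"
      moreover have "Some (a,0) \<in> Gr a" by (simp add: Gr_def)
      ultimately have "Some (a,0) \<in> Gr b" by simp
      then show "a = b" by (auto simp: Gr_def)
    qed
    have "finite (P A)" using fAA by (simp add: P_def)
    moreover have "card (Gr ` A) = card A" using injG by (simp add: card_image)
    moreover have "\<forall>C\<in>Gr ` A. card C = 3" using card_Gr by (auto simp: Gr_def)
    ultimately show "\<exists>M. nested_GDD 4 1 3 (card A) (P A) (Gr ` A) M"
      using nested_GDD_transport[OF N part] by blast
  qed
  from bchoice[OF exD] obtain D where D: "\<forall>A\<in>\<A>. nested_GDD 4 1 3 (card A) (P A) (Gr ` A) (D A)" by blast
  have "\<forall>A\<in>\<A>. \<exists>\<phi>. GDD_type True (4+1) (1+1) 3 (card A) (P A) (Gr ` A) (image_mset (\<lambda>B. insert (\<phi> B) B) (D A))"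
    using D unfolding nested_GDD_def by blast
  from bchoice[OF this] obtain \<phi>D where \<phi>D:
    "\<forall>A\<in>\<A>. GDD_type True (4+1) (1+1) 3 (card A) (P A) (Gr ` A) (image_mset (\<lambda>B. insert (\<phi>D A B) B) (D A))"
    by blast
  have DF: "\<forall>A\<in>\<A>. GDD_type False 4 1 3 (card A) (P A) (Gr ` A) (D A)"
    using D unfolding nested_GDD_def by blast
  have exE: "\<forall>G\<in>\<G>. \<exists>M. nested_BIBD (3 * card G + 1) 4 1 (Q G) M"
  proof
    fix G assume G: "G \<in> \<G>"
    then obtain Y :: "nat set" and B where N: "nested_BIBD (3 * card G + 1) 4 1 Y B"
      using GL assms(5) by blast
    have fGG: "finite G" using G UG fX by (metis Sup_upper finite_subset)
    have "finite (Q G)" using fGG by (simp add: Q_def)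
    moreover have "card (Q G) = 3 * card G + 1" using card_Q[OF fGG] by (simp add: Q_def)
    ultimately show "\<exists>M. nested_BIBD (3 * card G + 1) 4 1 (Q G) M"
      using nested_BIBD_transport[OF N] by blast
  qed
  from bchoice[OF exE] obtain E where E: "\<forall>G\<in>\<G>. nested_BIBD (3 * card G + 1) 4 1 (Q G) (E G)" by blast
  have "\<forall>G\<in>\<G>. \<exists>\<phi>. BIBD True (3 * card G + 1) (4+1) (1+1) (Q G) (image_mset (\<lambda>B. insert (\<phi> B) B) (E G))"
    using E unfolding nested_BIBD_def by blast
  from bchoice[OF this] obtain \<phi>E where \<phi>E:
    "\<forall>G\<in>\<G>. BIBD True (3 * card G + 1) (4+1) (1+1) (Q G) (image_mset (\<lambda>B. insert (\<phi>E G B) B) (E G))"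
    by blast
  have EF: "\<forall>G\<in>\<G>. BIBD False (3 * card G + 1) 4 1 (Q G) (E G)"
    using E unfolding nested_BIBD_def by blast
  define Dn where "Dn A = image_mset (\<lambda>B. insert (\<phi>D A B) B) (D A)" for A
  define En where "En G = image_mset (\<lambda>B. insert (\<phi>E G B) B) (E G)" for G
  define Y where "Y = Q X"
  define Bl where "Bl = sum D \<A> + sum E \<G>"
  define Nl where "Nl = sum Dn \<A> + sum En \<G>"
  have fY: "finite Y" using fX by (simp add: Y_def Q_def)
  have cY: "card Y = 3 * card X + 1" using card_Q[OF fX] by (simp add: Y_def Q_def)
  have PY: "P A \<subseteq> Y" if "A \<in> \<A>" for A using AX that by (auto simp: P_def Y_def Q_def)
  have QY: "Q G \<subseteq> Y" if "G \<in> \<G>" for G using UG that by (auto simp: Y_def Q_def)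
  have QD1: "\<forall>A\<in>\<A>. \<forall>B\<in>#D A. B \<subseteq> Some`(A\<times>{0..<3}) \<and> (\<forall>a\<in>A. card (B \<inter> Some`({a}\<times>{0..<3})) \<le> 1)"
  proof (intro ballI conjI)
    fix A B assume A: "A \<in> \<A>" and B: "B \<in># D A"
    note G = DF[rule_format, OF A]
    show "B \<subseteq> Some`(A\<times>{0..<3})" using GDD_blocks[OF G B] by (simp add: P_def)
    fix a assume "a \<in> A"
    then have "Gr a \<in> Gr ` A" by blast
    from GDD_meet[OF G B this] show "card (B \<inter> Some`({a}\<times>{0..<3})) \<le> 1" by (simp add: Gr_def)
  qed
  have QD2: "\<forall>A\<in>\<A>. \<forall>B\<in>#Dn A. B \<subseteq> Some`(A\<times>{0..<3}) \<and> (\<forall>a\<in>A. card (B \<inter> Some`({a}\<times>{0..<3})) \<le> 1)"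
  proof (intro ballI conjI)
    fix A B assume A: "A \<in> \<A>" and B: "B \<in># Dn A"
    note G = \<phi>D[rule_format, OF A, folded Dn_def]
    show "B \<subseteq> Some`(A\<times>{0..<3})" using GDD_blocks[OF G B] by (simp add: P_def)
    fix a assume "a \<in> A"
    then have "Gr a \<in> Gr ` A" by blast
    from GDD_meet[OF G B this] show "card (B \<inter> Some`({a}\<times>{0..<3})) \<le> 1" by (simp add: Gr_def)
  qed
  have QE1: "\<forall>G\<in>\<G>. \<forall>B\<in>#E G. B \<subseteq> insert None (Some`(G\<times>{0..<3}))"
  proof (intro ballI)
    fix G B assume G: "G \<in> \<G>" and B: "B \<in># E G"
    show "B \<subseteq> insert None (Some`(G\<times>{0..<3}))" using BIBD_blocks[OF EF[rule_format, OF G] B] by (simp add: Q_def)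
  qed
  have QE2: "\<forall>G\<in>\<G>. \<forall>B\<in>#En G. B \<subseteq> insert None (Some`(G\<times>{0..<3}))"
  proof (intro ballI)
    fix G B assume G: "G \<in> \<G>" and B: "B \<in># En G"
    show "B \<subseteq> insert None (Some`(G\<times>{0..<3}))"
      using BIBD_blocks[OF \<phi>E[rule_format, OF G, folded En_def] B] by (simp add: Q_def)
  qed
  have memBl: "(\<exists>A\<in>\<A>. B \<in># D A) \<or> (\<exists>G\<in>\<G>. B \<in># E G)" if "B \<in># Bl" for B
    using that fA fG by (auto simp: Bl_def set_mset_sum)
  have memNl: "(\<exists>A\<in>\<A>. B \<in># Dn A) \<or> (\<exists>G\<in>\<G>. B \<in># En G)" if "B \<in># Nl" for B
    using that fA fG by (auto simp: Nl_def set_mset_sum)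
  have B1: "BIBD False (3 * card X + 1) 4 1 Y Bl"
    unfolding BIBD_def
  proof (intro conjI ballI impI)
    show "finite Y" "card Y = 3 * card X + 1" using fY cY by auto
  next
    fix B assume "B \<in># Bl"
    then consider (a) A where "A \<in> \<A>" "B \<in># D A" | (g) G where "G \<in> \<G>" "B \<in># E G"
      using memBl by blast
    then have bb: "B \<subseteq> Y \<and> card B = 4"
    proof cases
      case a then show ?thesis using GDD_blocks[OF DF[rule_format, OF a(1)] a(2)] PY[OF a(1)] by blast
    next
      case g then show ?thesis using BIBD_blocks[OF EF[rule_format, OF g(1)] g(2)] QY[OF g(1)] by blast
    qed
    show "B \<subseteq> Y" using bb by blast
    show "card B = 4" using bb by simp
  next
    fix x y assume xy: "x \<in> Y" "y \<in> Y" "x \<noteq> y"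
    have "(\<exists>A\<in>\<A>. x \<in> Some`(A\<times>{0..<3}) \<and> y \<in> Some`(A\<times>{0..<3}) \<and>
            \<not>(\<exists>g\<in>(\<lambda>a. Some`({a}\<times>{0..<3}))`A. x\<in>g \<and> y\<in>g) \<and>
            pair_count (sum D \<A> + sum E \<G>) x y = pair_count (D A) x y)
       \<or> (\<exists>G\<in>\<G>. x \<in> insert None (Some`(G\<times>{0..<3})) \<and> y \<in> insert None (Some`(G\<times>{0..<3})) \<and>
            pair_count (sum D \<A> + sum E \<G>) x y = pair_count (E G) x y)"
      by (rule pc_total[OF gdd QD1 QE1]) (use xy in \<open>auto simp: Y_def Q_def\<close>)
    then have "pair_count Bl x y = 1"
    proof
      assume "\<exists>A\<in>\<A>. x \<in> Some`(A\<times>{0..<3}) \<and> y \<in> Some`(A\<times>{0..<3}) \<and>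
            \<not>(\<exists>g\<in>(\<lambda>a. Some`({a}\<times>{0..<3}))`A. x\<in>g \<and> y\<in>g) \<and>
            pair_count (sum D \<A> + sum E \<G>) x y = pair_count (D A) x y"
      then obtain A where A: "A \<in> \<A>" "x \<in> P A" "y \<in> P A" "\<not>(\<exists>g\<in>Gr`A. x\<in>g \<and> y\<in>g)"
        "pair_count Bl x y = pair_count (D A) x y" unfolding P_def Gr_def Bl_def by blast
      then show ?thesis using GDD_pair[OF DF[rule_format, OF A(1)] A(2,3) xy(3) A(4)] by simp
    next
      assume "\<exists>G\<in>\<G>. x \<in> insert None (Some`(G\<times>{0..<3})) \<and> y \<in> insert None (Some`(G\<times>{0..<3})) \<and>
            pair_count (sum D \<A> + sum E \<G>) x y = pair_count (E G) x y"
      then obtain G where G: "G \<in> \<G>" "x \<in> Q G" "y \<in> Q G" "pair_count Bl x y = pair_count (E G) x y"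
        unfolding Q_def Bl_def by blast
      then show ?thesis using BIBD_pair[OF EF[rule_format, OF G(1)] G(2,3) xy(3)] by simp
    qed
    then show "if False then pair_count Bl x y \<le> 1 else pair_count Bl x y = 1" by simp
  qed
  have B2: "BIBD True (3 * card X + 1) (4+1) (1+1) Y Nl"
    unfolding BIBD_def
  proof (intro conjI ballI impI)
    show "finite Y" "card Y = 3 * card X + 1" using fY cY by auto
  next
    fix B assume "B \<in># Nl"
    then consider (a) A where "A \<in> \<A>" "B \<in># Dn A" | (g) G where "G \<in> \<G>" "B \<in># En G"
      using memNl by blast
    then have bb: "B \<subseteq> Y \<and> card B = 4+1"
    proof cases
      case a then show ?thesis using GDD_blocks[OF \<phi>D[rule_format, OF a(1), folded Dn_def] a(2)] PY[OF a(1)] by blast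
    next
      case g then show ?thesis using BIBD_blocks[OF \<phi>E[rule_format, OF g(1), folded En_def] g(2)] QY[OF g(1)] by blast
    qed
    show "B \<subseteq> Y" using bb by blast
    show "card B = 4+1" using bb by simp
  next
    fix x y assume xy: "x \<in> Y" "y \<in> Y" "x \<noteq> y"
    have "(\<exists>A\<in>\<A>. x \<in> Some`(A\<times>{0..<3}) \<and> y \<in> Some`(A\<times>{0..<3}) \<and>
            \<not>(\<exists>g\<in>(\<lambda>a. Some`({a}\<times>{0..<3}))`A. x\<in>g \<and> y\<in>g) \<and>
            pair_count (sum Dn \<A> + sum En \<G>) x y = pair_count (Dn A) x y)
       \<or> (\<exists>G\<in>\<G>. x \<in> insert None (Some`(G\<times>{0..<3})) \<and> y \<in> insert None (Some`(G\<times>{0..<3})) \<and>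
            pair_count (sum Dn \<A> + sum En \<G>) x y = pair_count (En G) x y)"
      by (rule pc_total[OF gdd QD2 QE2]) (use xy in \<open>auto simp: Y_def Q_def\<close>)
    then have "pair_count Nl x y \<le> 1+1"
    proof
      assume "\<exists>A\<in>\<A>. x \<in> Some`(A\<times>{0..<3}) \<and> y \<in> Some`(A\<times>{0..<3}) \<and>
            \<not>(\<exists>g\<in>(\<lambda>a. Some`({a}\<times>{0..<3}))`A. x\<in>g \<and> y\<in>g) \<and>
            pair_count (sum Dn \<A> + sum En \<G>) x y = pair_count (Dn A) x y"
      then obtain A where A: "A \<in> \<A>" "x \<in> P A" "y \<in> P A" "\<not>(\<exists>g\<in>Gr`A. x\<in>g \<and> y\<in>g)"
        "pair_count Nl x y = pair_count (Dn A) x y" unfolding P_def Gr_def Nl_def by blast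
      then show ?thesis using GDD_pair[OF \<phi>D[rule_format, OF A(1), folded Dn_def] A(2,3) xy(3) A(4)] by simp
    next
      assume "\<exists>G\<in>\<G>. x \<in> insert None (Some`(G\<times>{0..<3})) \<and> y \<in> insert None (Some`(G\<times>{0..<3})) \<and>
            pair_count (sum Dn \<A> + sum En \<G>) x y = pair_count (En G) x y"
      then obtain G where G: "G \<in> \<G>" "x \<in> Q G" "y \<in> Q G" "pair_count Nl x y = pair_count (En G) x y"
        unfolding Q_def Nl_def by blast
      then show ?thesis using BIBD_pair[OF \<phi>E[rule_format, OF G(1), folded En_def] G(2,3) xy(3)] by simp
    qed
    then show "if True then pair_count Nl x y \<le> 1+1 else pair_count Nl x y = 1+1" by simp
  qed
  define Mp where "Mp = sum (\<lambda>A. image_mset (\<lambda>B. (B, \<phi>D A B)) (D A)) \<A>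
                      + sum (\<lambda>G. image_mset (\<lambda>B. (B, \<phi>E G B)) (E G)) \<G>"
  have m1: "image_mset fst Mp = Bl"
    by (simp add: Mp_def Bl_def image_mset_sum multiset.map_comp comp_def)
  have m2: "image_mset (\<lambda>z. insert (snd z) (fst z)) Mp = Nl"
    by (simp add: Mp_def Nl_def Dn_def En_def image_mset_sum multiset.map_comp comp_def)
  have "\<forall>B. count (image_mset fst Mp) B \<le> 1"
    using BIBD_count_le1[OF B1] m1 by simp
  from phi_exists[OF this] obtain \<phi> where
    "image_mset (\<lambda>B. insert (\<phi> B) B) Bl = Nl" using m1 m2 by metis
  then have "nested_BIBD (3 * card X + 1) 4 1 Y Bl"
    unfolding nested_BIBD_def using B1 B2 by metis
  from nested_BIBD_transport[OF this, of "{0..<3 * card X + 1}"]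
  show ?thesis by auto
qed

end
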